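(* Let $t>0$ be such that $I(t)$ has nonempty interior, $I(t)=[l(t),r(t)]$ with $l(t)<r(t)$. Then: (1) $F(x,t)=G(x,t)=0$ for all $x\in I(t)$; (2) $\tau_*(x,t)=\tau^*(x,t)=0$ for $x\in(l(t),r(t)]$, and $\tau_*(l(t),t)=0$; (3) $y_*(x,t)=y^*(x,t)=0$ for $x\in[l(t),r(t))$, and $y_*(r(t),t)=0$; (4) for all $0<t'<t$, $I(t')$ has nonempty interior; (5) the set $\{(x,t'):0\le t'\le t,\ x\in I(t')\}$ is star-shaped with respect to $(0,0)$.
   Context: Standing assumptions: $u_0,u_b:[0,\infty)\to\mathbb{R}$ bounded measurable with $u_b>0$; $\rho_0,\rho_b:[0,\infty)\to(0,\infty)$ positive locally bounded measurable. For $x,t,y,\tau\ge0$: $F(y,x,t)=\int_0^y[tu_0(\eta)+\eta-x]\rho_0(\eta)\,d\eta$, $G(\tau,x,t)=\int_0^\tau[x-u_b(\eta)(t-\eta)]\rho_b(\eta)u_b(\eta)\,d\eta$, $F(x,t)=\min_{y\ge0}F(y,x,t)$, $G(x,t)=\min_{\tau\ge0}G(\tau,x,t)$ (minima attained); $y_*\le y^*$ smallest/largest minimizers of $F(\cdot,x,t)$, $\tau_*\le\tau^*$ those of $G(\cdot,x,t)$. For fixed $t$, $F(\cdot,t)$ is decreasing and $G(\cdot,t)$ increasing in $x$, so $I(t)=\{x\ge0:F(x,t)=G(x,t)\}$ is a closed (possibly empty or one-point) interval, written $[l(t),r(t)]$ when nonempty. *)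

theory Defs
  imports "HOL-Analysis.Analysis"
begin

definition Fy :: "(real \<Rightarrow> real) \<Rightarrow> (real \<Rightarrow> real) \<Rightarrow> real \<Rightarrow> real \<Rightarrow> real \<Rightarrow> real" where
  "Fy u0 rho0 y x t = (LBINT \<eta>:{0..y}. (t * u0 \<eta> + \<eta> - x) * rho0 \<eta>)"

definition Gt :: "(real \<Rightarrow> real) \<Rightarrow> (real \<Rightarrow> real) \<Rightarrow> real \<Rightarrow> real \<Rightarrow> real \<Rightarrow> real" where
  "Gt ub rhob \<tau> x t = (LBINT \<eta>:{0..\<tau>}. (x - ub \<eta> * (t - \<eta>)) * rhob \<eta> * ub \<eta>)"

definition Fmin :: "(real \<Rightarrow> real) \<Rightarrow> (real \<Rightarrow> real) \<Rightarrow> real \<Rightarrow> real \<Rightarrow> real" where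
  "Fmin u0 rho0 x t = (INF y\<in>{0..}. Fy u0 rho0 y x t)"

definition Gmin :: "(real \<Rightarrow> real) \<Rightarrow> (real \<Rightarrow> real) \<Rightarrow> real \<Rightarrow> real \<Rightarrow> real" where
  "Gmin ub rhob x t = (INF \<tau>\<in>{0..}. Gt ub rhob \<tau> x t)"

definition ylow :: "(real \<Rightarrow> real) \<Rightarrow> (real \<Rightarrow> real) \<Rightarrow> real \<Rightarrow> real \<Rightarrow> real" where
  "ylow u0 rho0 x t = Inf {y. 0 \<le> y \<and> Fy u0 rho0 y x t = Fmin u0 rho0 x t}"
definition yupp :: "(real \<Rightarrow> real) \<Rightarrow> (real \<Rightarrow> real) \<Rightarrow> real \<Rightarrow> real \<Rightarrow> real" where
  "yupp u0 rho0 x t = Sup {y. 0 \<le> y \<and> Fy u0 rho0 y x t = Fmin u0 rho0 x t}"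
definition taulow :: "(real \<Rightarrow> real) \<Rightarrow> (real \<Rightarrow> real) \<Rightarrow> real \<Rightarrow> real \<Rightarrow> real" where
  "taulow ub rhob x t = Inf {\<tau>. 0 \<le> \<tau> \<and> Gt ub rhob \<tau> x t = Gmin ub rhob x t}"
definition tauupp :: "(real \<Rightarrow> real) \<Rightarrow> (real \<Rightarrow> real) \<Rightarrow> real \<Rightarrow> real \<Rightarrow> real" where
  "tauupp ub rhob x t = Sup {\<tau>. 0 \<le> \<tau> \<and> Gt ub rhob \<tau> x t = Gmin ub rhob x t}"

definition Iset :: "(real \<Rightarrow> real) \<Rightarrow> (real \<Rightarrow> real) \<Rightarrow> (real \<Rightarrow> real) \<Rightarrow> (real \<Rightarrow> real) \<Rightarrow> real \<Rightarrow> real set" where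
  "Iset u0 rho0 ub rhob t = {x. 0 \<le> x \<and> Fmin u0 rho0 x t = Gmin ub rhob x t}"

end

theory Submission
  imports Defs
begin

definition good :: "(real \<Rightarrow> real) \<Rightarrow> bool" where
  "good g \<longleftrightarrow> set_borel_measurable borel {0..} g \<and> (\<forall>M\<ge>0. \<exists>C. \<forall>\<eta>\<in>{0..M}. \<bar>g \<eta>\<bar> \<le> C)"

lemma good_mult: assumes "good f" "good g" shows "good (\<lambda>x. f x * g x)"
proof -
  have m: "(\<lambda>x. indicator {0..} x *\<^sub>R (f x * g x)) = (\<lambda>x. (indicator {0..} x *\<^sub>R f x) * (indicator {0..} x *\<^sub>R g x))"
    by (simp add: indicator_def fun_eq_iff)
  have "set_borel_measurable borel {0..} (\<lambda>x. f x * g x)"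
  proof -
    have f1: "(\<lambda>x. indicator {0..} x *\<^sub>R f x) \<in> borel_measurable borel"
      using assms(1) unfolding good_def set_borel_measurable_def by blast
    have g1: "(\<lambda>x. indicator {0..} x *\<^sub>R g x) \<in> borel_measurable borel"
      using assms(2) unfolding good_def set_borel_measurable_def by blast
    show ?thesis unfolding set_borel_measurable_def m by (rule borel_measurable_times[OF f1 g1])
  qed
  moreover have "\<exists>C. \<forall>\<eta>\<in>{0..M}. \<bar>f \<eta> * g \<eta>\<bar> \<le> C" if "M \<ge> 0" for M
  proof -
    have "\<exists>C. \<forall>\<eta>\<in>{0..M}. \<bar>f \<eta>\<bar> \<le> C" using assms(1) that by (simp add: good_def)
    then obtain C1 where c1: "\<forall>\<eta>\<in>{0..M}. \<bar>f \<eta>\<bar> \<le> C1" by blast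
    have "\<exists>C. \<forall>\<eta>\<in>{0..M}. \<bar>g \<eta>\<bar> \<le> C" using assms(2) that by (simp add: good_def)
    then obtain C2 where c2: "\<forall>\<eta>\<in>{0..M}. \<bar>g \<eta>\<bar> \<le> C2" by blast
    have "\<forall>\<eta>\<in>{0..M}. \<bar>f \<eta> * g \<eta>\<bar> \<le> C1 * C2"
      using c1 c2 unfolding abs_mult by (meson abs_ge_zero mult_mono order_trans)
    then show ?thesis by blast
  qed
  ultimately show ?thesis unfolding good_def by (intro conjI) auto
qed

lemma good_add: assumes "good f" "good g" shows "good (\<lambda>x. f x + g x)"
proof -
  have m: "(\<lambda>x. indicator {0..} x *\<^sub>R (f x + g x)) = (\<lambda>x. (indicator {0..} x *\<^sub>R f x) + (indicator {0..} x *\<^sub>R g x))"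
    by (simp add: indicator_def fun_eq_iff)
  have "set_borel_measurable borel {0..} (\<lambda>x. f x + g x)"
  proof -
    have f1: "(\<lambda>x. indicator {0..} x *\<^sub>R f x) \<in> borel_measurable borel"
      using assms(1) unfolding good_def set_borel_measurable_def by blast
    have g1: "(\<lambda>x. indicator {0..} x *\<^sub>R g x) \<in> borel_measurable borel"
      using assms(2) unfolding good_def set_borel_measurable_def by blast
    show ?thesis unfolding set_borel_measurable_def m by (rule borel_measurable_add[OF f1 g1])
  qed
  moreover have "\<exists>C. \<forall>\<eta>\<in>{0..M}. \<bar>f \<eta> + g \<eta>\<bar> \<le> C" if "M \<ge> 0" for M
  proof -
    have "\<exists>C. \<forall>\<eta>\<in>{0..M}. \<bar>f \<eta>\<bar> \<le> C" using assms(1) that by (simp add: good_def)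
    then obtain C1 where c1: "\<forall>\<eta>\<in>{0..M}. \<bar>f \<eta>\<bar> \<le> C1" by blast
    have "\<exists>C. \<forall>\<eta>\<in>{0..M}. \<bar>g \<eta>\<bar> \<le> C" using assms(2) that by (simp add: good_def)
    then obtain C2 where c2: "\<forall>\<eta>\<in>{0..M}. \<bar>g \<eta>\<bar> \<le> C2" by blast
    have "\<forall>\<eta>\<in>{0..M}. \<bar>f \<eta> + g \<eta>\<bar> \<le> C1 + C2"
      using c1 c2 by (meson abs_triangle_ineq add_mono order_trans)
    then show ?thesis by blast
  qed
  ultimately show ?thesis unfolding good_def by (intro conjI) auto
qed

lemma good_const: "good (\<lambda>x. c)"
  unfolding good_def set_borel_measurable_def apply (intro conjI)
   apply (intro borel_measurable_scaleR) apply simp apply simp by blast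
lemma good_id: "good (\<lambda>x. x)"
  unfolding good_def set_borel_measurable_def apply (intro conjI)
   apply (intro borel_measurable_scaleR) apply simp apply simp
  by (metis abs_of_nonneg atLeastAtMost_iff)

lemma good_int: assumes "good g"
  shows "set_integrable lborel {0..y} g" "g integrable_on {0..y}"
    "(LBINT \<eta>:{0..y}. g \<eta>) = integral {0..y} g"
proof -
  show si: "set_integrable lborel {0..y} g"
  proof (cases "y \<ge> 0")
    case True
    obtain C where C: "\<forall>\<eta>\<in>{0..y}. \<bar>g \<eta>\<bar> \<le> C" using assms True unfolding good_def by blast
    have eq: "(\<lambda>x. indicator {0..y} x *\<^sub>R g x) = (\<lambda>x. indicator {0..y} x *\<^sub>R (indicator {0..} x * g x))"
      by (simp add: indicator_def fun_eq_iff)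
    have "(\<lambda>x. indicator {0..} x * g x) \<in> borel_measurable lborel"
      using assms unfolding good_def set_borel_measurable_def by simp
    then show ?thesis unfolding set_integrable_def eq
      apply (intro integrableI_bounded_set_indicator[where B=C])
      using C True by (auto simp: indicator_def)
  next
    case False
    then have "{0..y} = {}" by auto
    then show ?thesis unfolding set_integrable_def by simp
  qed
  show "g integrable_on {0..y}" "(LBINT \<eta>:{0..y}. g \<eta>) = integral {0..y} g"
    using set_borel_integral_eq_integral[OF si] by auto
qed


lemma int_pos: assumes "good g" "\<forall>\<eta>\<ge>0. g \<eta> > 0" "y > 0"
  shows "integral {0..y} g > 0"
proof -
  have si: "set_integrable lborel {0..y} g" and ii: "g integrable_on {0..y}"
    and eq: "(LBINT \<eta>:{0..y}. g \<eta>) = integral {0..y} g" using good_int[OF assms(1)] by auto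
  have nn: "integral {0..y} g \<ge> 0"
    by (rule integral_nonneg[OF ii]) (use assms(2) in \<open>auto simp: less_imp_le\<close>)
  show ?thesis
  proof (rule ccontr)
    assume "\<not> ?thesis"
    with nn have z: "integral\<^sup>L lborel (\<lambda>x. indicator {0..y} x *\<^sub>R g x) = 0"
      using eq unfolding set_lebesgue_integral_def by simp
    have int: "integrable lborel (\<lambda>x. indicator {0..y} x *\<^sub>R g x)"
      using si unfolding set_integrable_def .
    have "AE x in lborel. 0 \<le> indicator {0..y} x *\<^sub>R g x"
      using assms(2) by (auto simp: indicator_def less_imp_le)
    then have "AE x in lborel. indicator {0..y} x *\<^sub>R g x = 0"
      using integral_nonneg_eq_0_iff_AE[OF int] z by simp
    then have "AE x in lborel. x \<notin> {0..y}"
      by (rule eventually_mono) (use assms(2) in \<open>auto simp: indicator_def split: if_splits\<close>)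
    then have "{0..y} \<in> null_sets lborel"
      by (subst AE_iff_null_sets) auto
    then have "emeasure lborel {0..y} = 0" by auto
    then show False using assms(3) by simp
  qed
qed

lemma icm: "(f::real\<Rightarrow>real) integrable_on S \<Longrightarrow> (\<lambda>x. c * f x) integrable_on S"
  using integrable_cmul[of f S c] by simp

lemma good_diff: assumes "good f" "good g" shows "good (\<lambda>x. f x - g x)"
proof -
  have "good (\<lambda>x. f x + (-1) * g x)" by (intro good_add good_mult good_const assms)
  then show ?thesis by simp
qed

lemma int_zero: "integral {0..0::real} g = 0"
  by simp

lemma exists_min: assumes "good g" "K \<ge> 0" "\<forall>\<eta>\<ge>K. g \<eta> \<ge> 0"
  shows "\<exists>y0\<ge>0. \<forall>y\<ge>0. integral {0..y0} g \<le> integral {0..y} g"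
proof -
  have "continuous_on {0..K} (\<lambda>y. integral {0..y} g)"
    by (rule indefinite_integral_continuous_1) (rule good_int(2)[OF assms(1)])
  then obtain y0 where y0: "y0 \<in> {0..K}" "\<forall>y\<in>{0..K}. integral {0..y0} g \<le> integral {0..y} g"
    using continuous_attains_inf[of "{0..K}" "\<lambda>y. integral {0..y} g"] assms(2) by auto
  have "integral {0..y0} g \<le> integral {0..y} g" if "y \<ge> 0" for y
  proof (cases "y \<le> K")
    case True then show ?thesis using y0 that by auto
  next
    case False
    have ii: "g integrable_on {0..y}" by (rule good_int(2)[OF assms(1)])
    have "integral {0..K} g + integral {K..y} g = integral {0..y} g"
      using False assms(2) ii by (intro Henstock_Kurzweil_Integration.integral_combine) auto
    moreover have "integral {K..y} g \<ge> 0"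
      apply (rule integral_nonneg)
       apply (rule integrable_on_subinterval[OF ii]) using assms(2) apply auto[1]
      using assms(3) by auto
    moreover have "integral {0..y0} g \<le> integral {0..K} g" using y0 assms(2) by auto
    ultimately show ?thesis by linarith
  qed
  then show ?thesis using y0 by auto
qed


lemma inf_attained:
  assumes "y0 \<ge> 0" "\<forall>y\<ge>0. \<phi> y0 \<le> (\<phi> y::real)"
  shows "(INF y\<in>{0..}. \<phi> y) = \<phi> y0"
  by (rule cInf_eq_minimum) (use assms in auto)

locale setting =
  fixes u0 ub rho0 rhob :: "real \<Rightarrow> real"
  assumes gu0: "good u0" and gub: "good ub" and grho0: "good rho0" and grhob: "good rhob"
    and ubpos: "\<forall>\<eta>\<ge>0. ub \<eta> > 0" and rho0pos: "\<forall>\<eta>\<ge>0. rho0 \<eta> > 0"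
    and rhobpos: "\<forall>\<eta>\<ge>0. rhob \<eta> > 0" and u0bdd: "\<exists>B. \<forall>\<eta>\<ge>0. \<bar>u0 \<eta>\<bar> \<le> B"
begin

definition "P y = integral {0..y} rho0"
definition "U y = integral {0..y} (\<lambda>\<eta>. u0 \<eta> * rho0 \<eta>)"
definition "E y = integral {0..y} (\<lambda>\<eta>. \<eta> * rho0 \<eta>)"
definition "Q y = integral {0..y} (\<lambda>\<eta>. rhob \<eta> * ub \<eta>)"
definition "V y = integral {0..y} (\<lambda>\<eta>. ub \<eta> * ub \<eta> * rhob \<eta>)"
definition "W y = integral {0..y} (\<lambda>\<eta>. \<eta> * (ub \<eta> * ub \<eta> * rhob \<eta>))"

lemma g1: "good (\<lambda>\<eta>. u0 \<eta> * rho0 \<eta>)" by (intro good_mult gu0 grho0)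
lemma g2: "good (\<lambda>\<eta>. \<eta> * rho0 \<eta>)" by (intro good_mult good_id grho0)
lemma g3: "good (\<lambda>\<eta>. rhob \<eta> * ub \<eta>)" by (intro good_mult grhob gub)
lemma g4: "good (\<lambda>\<eta>. ub \<eta> * ub \<eta> * rhob \<eta>)" by (intro good_mult grhob gub)
lemma g5: "good (\<lambda>\<eta>. \<eta> * (ub \<eta> * ub \<eta> * rhob \<eta>))" by (intro good_mult good_id g4)

lemma Fy_eq: "Fy u0 rho0 y x t = t * U y + E y - x * P y"
proof -
  have i0: "rho0 integrable_on {0..y}" by (rule good_int(2)[OF grho0])
  have i1: "(\<lambda>\<eta>. u0 \<eta> * rho0 \<eta>) integrable_on {0..y}" by (rule good_int(2)[OF g1])
  have i2: "(\<lambda>\<eta>. \<eta> * rho0 \<eta>) integrable_on {0..y}" by (rule good_int(2)[OF g2])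
  have gf: "good (\<lambda>\<eta>. (t * u0 \<eta> + \<eta> - x) * rho0 \<eta>)"
    by (intro good_mult good_add good_diff good_const good_id gu0 grho0)
  have "Fy u0 rho0 y x t = integral {0..y} (\<lambda>\<eta>. (t * u0 \<eta> + \<eta> - x) * rho0 \<eta>)"
    unfolding Fy_def by (rule good_int(3)[OF gf])
  also have "\<dots> = integral {0..y} (\<lambda>\<eta>. (t * (u0 \<eta> * rho0 \<eta>) + \<eta> * rho0 \<eta>) - x * rho0 \<eta>)"
    by (rule integral_cong) (simp add: algebra_simps)
  also have "\<dots> = t * U y + E y - x * P y"
    unfolding U_def E_def P_def
    by (simp add: integral_diff integral_add integrable_add integrable_diff icm i0 i1 i2)
  finally show ?thesis .
qed

lemma Gt_eq: "Gt ub rhob y x t = x * Q y - t * V y + W y"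
proof -
  have i0: "(\<lambda>\<eta>. rhob \<eta> * ub \<eta>) integrable_on {0..y}" by (rule good_int(2)[OF g3])
  have i1: "(\<lambda>\<eta>. ub \<eta> * ub \<eta> * rhob \<eta>) integrable_on {0..y}" by (rule good_int(2)[OF g4])
  have i2: "(\<lambda>\<eta>. \<eta> * (ub \<eta> * ub \<eta> * rhob \<eta>)) integrable_on {0..y}" by (rule good_int(2)[OF g5])
  have gf: "good (\<lambda>\<eta>. (x - ub \<eta> * (t - \<eta>)) * rhob \<eta> * ub \<eta>)"
  proof -
    have "good (\<lambda>\<eta>. (x + (- t) * ub \<eta> + ub \<eta> * \<eta>) * rhob \<eta> * ub \<eta>)"
      by (intro good_mult good_add good_const good_id gub grhob)
    moreover have "(\<lambda>\<eta>. (x + (- t) * ub \<eta> + ub \<eta> * \<eta>) * rhob \<eta> * ub \<eta>) = (\<lambda>\<eta>. (x - ub \<eta> * (t - \<eta>)) * rhob \<eta> * ub \<eta>)"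
      by (simp add: fun_eq_iff algebra_simps)
    ultimately show ?thesis by simp
  qed
  have "Gt ub rhob y x t = integral {0..y} (\<lambda>\<eta>. (x - ub \<eta> * (t - \<eta>)) * rhob \<eta> * ub \<eta>)"
    unfolding Gt_def by (rule good_int(3)[OF gf])
  also have "\<dots> = integral {0..y} (\<lambda>\<eta>. (x * (rhob \<eta> * ub \<eta>) - t * (ub \<eta> * ub \<eta> * rhob \<eta>)) + \<eta> * (ub \<eta> * ub \<eta> * rhob \<eta>))"
    by (rule integral_cong) (simp add: algebra_simps)
  also have "\<dots> = x * Q y - t * V y + W y"
    unfolding Q_def V_def W_def
    by (simp add: integral_diff integral_add integrable_add integrable_diff icm i0 i1 i2)
  finally show ?thesis .
qed


lemma Fy0: "Fy u0 rho0 0 x t = 0" by (simp add: Fy_eq U_def E_def P_def)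
lemma Gt0: "Gt ub rhob 0 x t = 0" by (simp add: Gt_eq Q_def V_def W_def)

lemma Ppos: "y > 0 \<Longrightarrow> P y > 0" unfolding P_def by (rule int_pos[OF grho0 rho0pos])
lemma Qpos: "y > 0 \<Longrightarrow> Q y > 0" unfolding Q_def
  by (rule int_pos[OF g3]) (use rhobpos ubpos in auto)
lemma Pnn: "y \<ge> 0 \<Longrightarrow> P y \<ge> 0"
  using Ppos[of y] by (cases "y = 0") (auto simp: P_def)
lemma Qnn: "y \<ge> 0 \<Longrightarrow> Q y \<ge> 0"
  using Qpos[of y] by (cases "y = 0") (auto simp: Q_def)
lemma Enn: "E y \<ge> 0" unfolding E_def
  by (rule integral_nonneg[OF good_int(2)[OF g2]]) (use rho0pos in \<open>auto simp: less_imp_le\<close>)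
lemma Wnn: "W y \<ge> 0" unfolding W_def
  by (rule integral_nonneg[OF good_int(2)[OF g5]]) (use rhobpos ubpos in \<open>auto simp: less_imp_le\<close>)

lemma F_min: assumes "t \<ge> 0" shows "\<exists>y0\<ge>0. \<forall>y\<ge>0. Fy u0 rho0 y0 x t \<le> Fy u0 rho0 y x t"
proof -
  obtain B where B: "\<forall>\<eta>\<ge>0. \<bar>u0 \<eta>\<bar> \<le> B" using u0bdd by blast
  define K where "K = max 0 (x + t * B)"
  define g where "g = (\<lambda>\<eta>. (t * u0 \<eta> + \<eta> - x) * rho0 \<eta>)"
  have gf: "good g" unfolding g_def
    by (intro good_mult good_add good_diff good_const good_id gu0 grho0)
  have "g \<eta> \<ge> 0" if "\<eta> \<ge> K" for \<eta>
  proof -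
    have e0: "\<eta> \<ge> 0" using that by (simp add: K_def)
    have "- B \<le> u0 \<eta>" using B e0 by (metis abs_le_iff minus_le_iff)
    then have "t * (- B) \<le> t * u0 \<eta>" using assms by (rule mult_left_mono)
    then have "t * u0 \<eta> + \<eta> - x \<ge> 0" using that unfolding K_def by (simp add: algebra_simps)
    then show ?thesis unfolding g_def using rho0pos e0 by (simp add: less_imp_le)
  qed
  then obtain y0 where "y0 \<ge> 0" "\<forall>y\<ge>0. integral {0..y0} g \<le> integral {0..y} g"
    using exists_min[OF gf, of K] by (auto simp: K_def)
  moreover have "\<And>y. Fy u0 rho0 y x t = integral {0..y} g"
    unfolding Fy_def g_def[symmetric] by (rule good_int(3)[OF gf])
  ultimately show ?thesis by auto
qed

lemma G_min: assumes "t \<ge> 0" "x \<ge> 0" shows "\<exists>y0\<ge>0. \<forall>y\<ge>0. Gt ub rhob y0 x t \<le> Gt ub rhob y x t"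
proof -
  define g where "g = (\<lambda>\<eta>. (x - ub \<eta> * (t - \<eta>)) * rhob \<eta> * ub \<eta>)"
  have gf: "good g"
  proof -
    have "good (\<lambda>\<eta>. (x + (- t) * ub \<eta> + ub \<eta> * \<eta>) * rhob \<eta> * ub \<eta>)"
      by (intro good_mult good_add good_const good_id gub grhob)
    moreover have "(\<lambda>\<eta>. (x + (- t) * ub \<eta> + ub \<eta> * \<eta>) * rhob \<eta> * ub \<eta>) = g"
      by (simp add: g_def fun_eq_iff algebra_simps)
    ultimately show ?thesis by simp
  qed
  have "g \<eta> \<ge> 0" if "\<eta> \<ge> t" for \<eta>
  proof -
    have e0: "\<eta> \<ge> 0" using that assms by simp
    have "ub \<eta> * (\<eta> - t) \<ge> 0" using ubpos e0 that by (simp add: less_imp_le)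
    then have "x - ub \<eta> * (t - \<eta>) \<ge> 0" using assms by (simp add: algebra_simps)
    then show ?thesis unfolding g_def using rhobpos ubpos e0 by (simp add: less_imp_le)
  qed
  then obtain y0 where "y0 \<ge> 0" "\<forall>y\<ge>0. integral {0..y0} g \<le> integral {0..y} g"
    using exists_min[OF gf, of t] assms by auto
  moreover have "\<And>y. Gt ub rhob y x t = integral {0..y} g"
    unfolding Gt_def g_def[symmetric] by (rule good_int(3)[OF gf])
  ultimately show ?thesis by auto
qed

lemma Fmin_char: assumes "t \<ge> 0"
  shows "\<exists>y0\<ge>0. Fmin u0 rho0 x t = Fy u0 rho0 y0 x t \<and> (\<forall>y\<ge>0. Fmin u0 rho0 x t \<le> Fy u0 rho0 y x t)"
proof -
  obtain y0 where "y0 \<ge> 0" "\<forall>y\<ge>0. Fy u0 rho0 y0 x t \<le> Fy u0 rho0 y x t" using F_min[OF assms] by blast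
  moreover then have "Fmin u0 rho0 x t = Fy u0 rho0 y0 x t" unfolding Fmin_def by (rule inf_attained)
  ultimately show ?thesis by auto
qed

lemma Gmin_char: assumes "t \<ge> 0" "x \<ge> 0"
  shows "\<exists>y0\<ge>0. Gmin ub rhob x t = Gt ub rhob y0 x t \<and> (\<forall>y\<ge>0. Gmin ub rhob x t \<le> Gt ub rhob y x t)"
proof -
  obtain y0 where "y0 \<ge> 0" "\<forall>y\<ge>0. Gt ub rhob y0 x t \<le> Gt ub rhob y x t" using G_min[OF assms] by blast
  moreover then have "Gmin ub rhob x t = Gt ub rhob y0 x t" unfolding Gmin_def by (rule inf_attained)
  ultimately show ?thesis by auto
qed


lemma F_le0: "t \<ge> 0 \<Longrightarrow> Fmin u0 rho0 x t \<le> 0"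
  using Fmin_char[of t x] Fy0[of x t] by auto
lemma G_le0: "t \<ge> 0 \<Longrightarrow> x \<ge> 0 \<Longrightarrow> Gmin ub rhob x t \<le> 0"
  using Gmin_char[of t x] Gt0[of x t] by auto

lemma F_mono: assumes "t \<ge> 0" "x \<le> x'" shows "Fmin u0 rho0 x' t \<le> Fmin u0 rho0 x t"
proof -
  obtain y0 where y0: "y0 \<ge> 0" "Fmin u0 rho0 x t = Fy u0 rho0 y0 x t" using Fmin_char[OF assms(1)] by blast
  have "Fmin u0 rho0 x' t \<le> Fy u0 rho0 y0 x' t" using Fmin_char[OF assms(1), of x'] y0 by auto
  also have "\<dots> \<le> Fy u0 rho0 y0 x t" unfolding Fy_eq
    using mult_right_mono[OF assms(2) Pnn[OF y0(1)]] by simp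
  finally show ?thesis using y0 by simp
qed

lemma G_mono: assumes "t \<ge> 0" "0 \<le> x" "x \<le> x'" shows "Gmin ub rhob x t \<le> Gmin ub rhob x' t"
proof -
  obtain y0 where y0: "y0 \<ge> 0" "Gmin ub rhob x' t = Gt ub rhob y0 x' t" using Gmin_char[OF assms(1), of x'] assms by auto
  have "Gmin ub rhob x t \<le> Gt ub rhob y0 x t" using Gmin_char[OF assms(1,2)] y0 by auto
  also have "\<dots> \<le> Gt ub rhob y0 x' t" unfolding Gt_eq
    using mult_right_mono[OF assms(3) Qnn[OF y0(1)]] by simp
  finally show ?thesis using y0 by simp
qed

lemma F_zeroI: "t \<ge> 0 \<Longrightarrow> (\<forall>y\<ge>0. Fy u0 rho0 y x t \<ge> 0) \<Longrightarrow> Fmin u0 rho0 x t = 0"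
  using Fmin_char[of t x] F_le0[of t x] by force
lemma G_zeroI: "t \<ge> 0 \<Longrightarrow> x \<ge> 0 \<Longrightarrow> (\<forall>y\<ge>0. Gt ub rhob y x t \<ge> 0) \<Longrightarrow> Gmin ub rhob x t = 0"
  using Gmin_char[of t x] G_le0[of t x] by force
lemma F_zeroD: "t \<ge> 0 \<Longrightarrow> Fmin u0 rho0 x t = 0 \<Longrightarrow> y \<ge> 0 \<Longrightarrow> Fy u0 rho0 y x t \<ge> 0"
  using Fmin_char[of t x] by force
lemma G_zeroD: "t \<ge> 0 \<Longrightarrow> x \<ge> 0 \<Longrightarrow> Gmin ub rhob x t = 0 \<Longrightarrow> y \<ge> 0 \<Longrightarrow> Gt ub rhob y x t \<ge> 0"
  using Gmin_char[of t x] by force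

lemma scale: assumes "0 \<le> s" "s \<le> 1" "0 \<le> x" "0 \<le> t" "Fmin u0 rho0 x t = 0" "Gmin ub rhob x t = 0"
  shows "Fmin u0 rho0 (s * x) (s * t) = 0 \<and> Gmin ub rhob (s * x) (s * t) = 0"
proof
  have st: "s * t \<ge> 0" "s * x \<ge> 0" using assms by auto
  show "Fmin u0 rho0 (s * x) (s * t) = 0"
  proof (rule F_zeroI[OF st(1)], intro allI impI)
    fix y :: real assume y: "y \<ge> 0"
    have "Fy u0 rho0 y (s * x) (s * t) = s * Fy u0 rho0 y x t + (1 - s) * E y"
      unfolding Fy_eq by (simp add: algebra_simps)
    moreover have "s * Fy u0 rho0 y x t \<ge> 0" using F_zeroD[OF assms(4,5) y] assms(1) by simp
    moreover have "(1 - s) * E y \<ge> 0" using Enn[of y] assms(2) by simp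
    ultimately show "Fy u0 rho0 y (s * x) (s * t) \<ge> 0" by linarith
  qed
  show "Gmin ub rhob (s * x) (s * t) = 0"
  proof (rule G_zeroI[OF st], intro allI impI)
    fix y :: real assume y: "y \<ge> 0"
    have "Gt ub rhob y (s * x) (s * t) = s * Gt ub rhob y x t + (1 - s) * W y"
      unfolding Gt_eq by (simp add: algebra_simps)
    moreover have "s * Gt ub rhob y x t \<ge> 0" using G_zeroD[OF assms(4,3,6) y] assms(1) by simp
    moreover have "(1 - s) * W y \<ge> 0" using Wnn[of y] assms(2) by simp
    ultimately show "Gt ub rhob y (s * x) (s * t) \<ge> 0" by linarith
  qed
qed


lemma main:
  fixes t l r :: real
  assumes t_pos: "t > 0" and I_eq: "Iset u0 rho0 ub rhob t = {l..r}" and lr: "l < r"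
  shows "(\<forall>x\<in>{l..r}. Fmin u0 rho0 x t = 0 \<and> Gmin ub rhob x t = 0)
    \<and> (\<forall>x\<in>{l<..r}. taulow ub rhob x t = 0 \<and> tauupp ub rhob x t = 0)
    \<and> taulow ub rhob l t = 0
    \<and> (\<forall>x\<in>{l..<r}. ylow u0 rho0 x t = 0 \<and> yupp u0 rho0 x t = 0)
    \<and> ylow u0 rho0 r t = 0
    \<and> (\<forall>t'. 0 < t' \<and> t' < t \<longrightarrow> interior (Iset u0 rho0 ub rhob t') \<noteq> {})
    \<and> (\<forall>p\<in>{(x, t'). 0 \<le> t' \<and> t' \<le> t \<and> x \<in> Iset u0 rho0 ub rhob t'}.
         closed_segment (0::real \<times> real) p
           \<subseteq> {(x, t'). 0 \<le> t' \<and> t' \<le> t \<and> x \<in> Iset u0 rho0 ub rhob t'})"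
proof -
  have t0: "t \<ge> 0" using t_pos by simp
  have inI: "x \<in> Iset u0 rho0 ub rhob t" if "l \<le> x" "x \<le> r" for x using I_eq that by auto
  have l0: "l \<ge> 0" using inI[of l] lr by (simp add: Iset_def)
  have FGl: "Fmin u0 rho0 l t = Gmin ub rhob l t" and FGr: "Fmin u0 rho0 r t = Gmin ub rhob r t"
    using inI[of l] inI[of r] lr by (auto simp: Iset_def)
  have m1: "Fmin u0 rho0 r t \<le> Fmin u0 rho0 l t" using F_mono[OF t0] lr by simp
  have m2: "Gmin ub rhob l t \<le> Gmin ub rhob r t" using G_mono[OF t0 l0] lr by simp
  obtain \<tau>1 where \<tau>1: "\<tau>1 \<ge> 0" "Gmin ub rhob r t = Gt ub rhob \<tau>1 r t"
    using Gmin_char[OF t0, of r] l0 lr by auto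
  have "Gmin ub rhob l t \<le> Gt ub rhob \<tau>1 l t" using Gmin_char[OF t0 l0] \<tau>1 by auto
  then have "(r - l) * Q \<tau>1 \<le> 0" using \<tau>1 FGl FGr m1 m2 unfolding Gt_eq by (simp add: algebra_simps)
  then have "Q \<tau>1 \<le> 0" using lr by (simp add: mult_le_0_iff)
  then have "\<tau>1 = 0" using Qpos[of \<tau>1] \<tau>1 by force
  then have Gr0: "Gmin ub rhob r t = 0" using \<tau>1 Gt0 by simp
  then have Fr0: "Fmin u0 rho0 r t = 0" and Gl0: "Gmin ub rhob l t = 0" and Fl0: "Fmin u0 rho0 l t = 0"
    using FGl FGr m1 m2 by linarith+
  have P1: "Fmin u0 rho0 x t = 0 \<and> Gmin ub rhob x t = 0" if "x \<in> {l..r}" for x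
  proof -
    have "x \<in> Iset u0 rho0 ub rhob t" using inI that by auto
    then have "Fmin u0 rho0 x t = Gmin ub rhob x t" by (simp add: Iset_def)
    moreover have "Fmin u0 rho0 r t \<le> Fmin u0 rho0 x t" using F_mono[OF t0] that by simp
    moreover have "Fmin u0 rho0 x t \<le> 0" by (rule F_le0[OF t0])
    ultimately show ?thesis using Fr0 by linarith
  qed
  have P2: "taulow ub rhob x t = 0 \<and> tauupp ub rhob x t = 0" if x: "x \<in> {l<..r}" for x
  proof -
    have x0: "x \<ge> 0" using x l0 by simp
    have S: "{\<tau>. 0 \<le> \<tau> \<and> Gt ub rhob \<tau> x t = Gmin ub rhob x t} = {0}"
    proof
      show "{0} \<subseteq> {\<tau>. 0 \<le> \<tau> \<and> Gt ub rhob \<tau> x t = Gmin ub rhob x t}"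
        using P1[of x] x Gt0 by auto
      show "{\<tau>. 0 \<le> \<tau> \<and> Gt ub rhob \<tau> x t = Gmin ub rhob x t} \<subseteq> {0}"
      proof
        fix \<tau> assume "\<tau> \<in> {\<tau>. 0 \<le> \<tau> \<and> Gt ub rhob \<tau> x t = Gmin ub rhob x t}"
        then have \<tau>: "\<tau> \<ge> 0" "Gt ub rhob \<tau> x t = 0" using P1[of x] x by auto
        have "0 \<le> Gt ub rhob \<tau> l t" using G_zeroD[OF t0 l0 Gl0 \<tau>(1)] .
        then have "(x - l) * Q \<tau> \<le> 0" using \<tau> unfolding Gt_eq by (simp add: algebra_simps)
        then have "Q \<tau> \<le> 0" using x by (simp add: mult_le_0_iff)
        then show "\<tau> \<in> {0}" using Qpos[of \<tau>] \<tau> by force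
      qed
    qed
    show ?thesis unfolding taulow_def tauupp_def S by simp
  qed
  have P3: "ylow u0 rho0 x t = 0 \<and> yupp u0 rho0 x t = 0" if x: "x \<in> {l..<r}" for x
  proof -
    have S: "{y. 0 \<le> y \<and> Fy u0 rho0 y x t = Fmin u0 rho0 x t} = {0}"
    proof
      show "{0} \<subseteq> {y. 0 \<le> y \<and> Fy u0 rho0 y x t = Fmin u0 rho0 x t}"
        using P1[of x] x Fy0 by auto
      show "{y. 0 \<le> y \<and> Fy u0 rho0 y x t = Fmin u0 rho0 x t} \<subseteq> {0}"
      proof
        fix y assume "y \<in> {y. 0 \<le> y \<and> Fy u0 rho0 y x t = Fmin u0 rho0 x t}"
        then have y: "y \<ge> 0" "Fy u0 rho0 y x t = 0" using P1[of x] x by auto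
        have "0 \<le> Fy u0 rho0 y r t" using F_zeroD[OF t0 Fr0 y(1)] .
        then have "(r - x) * P y \<le> 0" using y unfolding Fy_eq by (simp add: algebra_simps)
        then have "P y \<le> 0" using x by (simp add: mult_le_0_iff)
        then show "y \<in> {0}" using Ppos[of y] y by force
      qed
    qed
    show ?thesis unfolding ylow_def yupp_def S by simp
  qed
  have P2l: "taulow ub rhob l t = 0"
    unfolding taulow_def by (rule cInf_eq_minimum) (use Gl0 Gt0 in auto)
  have P3r: "ylow u0 rho0 r t = 0"
    unfolding ylow_def by (rule cInf_eq_minimum) (use Fr0 Fy0 in auto)
  have sc: "s * x \<in> Iset u0 rho0 ub rhob (s * t) \<and> Fmin u0 rho0 (s * x) (s * t) = 0 \<and> Gmin ub rhob (s * x) (s * t) = 0"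
    if "0 \<le> s" "s \<le> 1" "x \<in> {l..r}" for s x
  proof -
    have "x \<ge> 0" using that l0 by auto
    then show ?thesis using scale[OF that(1,2) _ t0] P1[OF that(3)] that(1) by (auto simp: Iset_def)
  qed
  have P4: "interior (Iset u0 rho0 ub rhob t') \<noteq> {}" if "0 < t'" "t' < t" for t'
  proof -
    define s where "s = t' / t"
    have s: "0 < s" "s < 1" "s * t = t'" using that t_pos by (auto simp: s_def)
    have sub: "{s * l<..<s * r} \<subseteq> Iset u0 rho0 ub rhob t'"
    proof
      fix z assume z: "z \<in> {s * l<..<s * r}"
      have "z / s \<in> {l..r}" using z s by (auto simp: field_simps)
      then have "s * (z / s) \<in> Iset u0 rho0 ub rhob (s * t)" using sc[of s "z / s"] s by auto
      then show "z \<in> Iset u0 rho0 ub rhob t'" using s by simp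
    qed
    have "{s * l<..<s * r} \<subseteq> interior (Iset u0 rho0 ub rhob t')"
      by (rule interior_maximal[OF sub]) simp
    moreover have "{s * l<..<s * r} \<noteq> {}" using s lr by simp
    ultimately show ?thesis by blast
  qed
  have Z: "Fmin u0 rho0 x t' = 0 \<and> Gmin ub rhob x t' = 0"
    if "0 \<le> t'" "t' \<le> t" "x \<in> Iset u0 rho0 ub rhob t'" for x t'
  proof -
    have x0: "x \<ge> 0" and FG: "Fmin u0 rho0 x t' = Gmin ub rhob x t'" using that by (auto simp: Iset_def)
    show ?thesis
    proof (cases "t' = 0")
      case True
      have "Gmin ub rhob x t' = 0"
        using that(1) x0 proof (rule G_zeroI, intro allI impI)
        fix y :: real assume "y \<ge> 0"
        then show "Gt ub rhob y x t' \<ge> 0" unfolding Gt_eq True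
          using Qnn[of y] Wnn[of y] x0 by simp
      qed
      then show ?thesis using FG by simp
    next
      case False
      define s where "s = t' / t"
      have s: "0 < s" "s \<le> 1" "s * t = t'" using that False t_pos by (auto simp: s_def)
      have a: "Gmin ub rhob (s * l) t' = 0" and b: "Fmin u0 rho0 (s * r) t' = 0"
        using sc[of s l] sc[of s r] s lr by auto
      have ab: "s * l < s * r" "0 \<le> s * l" using s lr l0 by auto
      show ?thesis
      proof (cases "x < s * r")
        case True
        have "Fmin u0 rho0 (s * r) t' \<le> Fmin u0 rho0 x t'" using F_mono[OF that(1)] True by simp
        then show ?thesis using F_le0[OF that(1), of x] b FG by linarith
      next
        case False
        have "Gmin ub rhob (s * l) t' \<le> Gmin ub rhob x t'" using G_mono[OF that(1) ab(2)] False ab by simp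
        then show ?thesis using G_le0[OF that(1) x0] a FG by linarith
      qed
    qed
  qed
  have P5: "closed_segment (0::real \<times> real) p
           \<subseteq> {(x, t'). 0 \<le> t' \<and> t' \<le> t \<and> x \<in> Iset u0 rho0 ub rhob t'}"
    if "p \<in> {(x, t'). 0 \<le> t' \<and> t' \<le> t \<and> x \<in> Iset u0 rho0 ub rhob t'}" for p
  proof
    obtain x t' where p0: "p = (x, t')" by (cases p)
    then have p: "p = (x, t')" "0 \<le> t'" "t' \<le> t" "x \<in> Iset u0 rho0 ub rhob t'" using that by auto
    have x0: "x \<ge> 0" using p by (simp add: Iset_def)
    have z: "Fmin u0 rho0 x t' = 0" "Gmin ub rhob x t' = 0" using Z[OF p(2-4)] by auto
    fix q assume "q \<in> closed_segment (0::real \<times> real) p"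
    then obtain u where u: "0 \<le> u" "u \<le> 1" "q = u *\<^sub>R p" unfolding closed_segment_def by auto
    have q: "q = (u * x, u * t')" using u p by simp
    have "Fmin u0 rho0 (u * x) (u * t') = 0 \<and> Gmin ub rhob (u * x) (u * t') = 0"
      by (rule scale[OF u(1,2) x0 p(2) z])
    moreover have "u * t' \<le> t" using u p by (meson mult_left_le_one_le order_trans)
    ultimately show "q \<in> {(x, t'). 0 \<le> t' \<and> t' \<le> t \<and> x \<in> Iset u0 rho0 ub rhob t'}"
      using q u p x0 by (auto simp: Iset_def)
  qed
  show ?thesis using P1 P2 P2l P3 P3r P4 P5 by blast
qed

end

theorem lemma2p7:
  fixes u0 ub rho0 rhob :: "real \<Rightarrow> real" and t l r :: real
  assumes u0_meas: "set_borel_measurable borel {0..} u0"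
    and u0_bdd: "\<exists>B. \<forall>\<eta>\<ge>0. \<bar>u0 \<eta>\<bar> \<le> B"
    and ub_meas: "set_borel_measurable borel {0..} ub"
    and ub_bdd: "\<exists>B. \<forall>\<eta>\<ge>0. \<bar>ub \<eta>\<bar> \<le> B"
    and ub_pos: "\<forall>\<eta>\<ge>0. ub \<eta> > 0"
    and rho0_meas: "set_borel_measurable borel {0..} rho0"
    and rho0_pos: "\<forall>\<eta>\<ge>0. rho0 \<eta> > 0"
    and rho0_locbdd: "\<forall>M\<ge>0. \<exists>C. \<forall>\<eta>\<in>{0..M}. rho0 \<eta> \<le> C"
    and rhob_meas: "set_borel_measurable borel {0..} rhob"
    and rhob_pos: "\<forall>\<eta>\<ge>0. rhob \<eta> > 0"
    and rhob_locbdd: "\<forall>M\<ge>0. \<exists>C. \<forall>\<eta>\<in>{0..M}. rhob \<eta> \<le> C"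
    and t_pos: "t > 0"
    and I_eq: "Iset u0 rho0 ub rhob t = {l..r}"
    and lr: "l < r"
  shows "(\<forall>x\<in>{l..r}. Fmin u0 rho0 x t = 0 \<and> Gmin ub rhob x t = 0)
    \<and> (\<forall>x\<in>{l<..r}. taulow ub rhob x t = 0 \<and> tauupp ub rhob x t = 0)
    \<and> taulow ub rhob l t = 0
    \<and> (\<forall>x\<in>{l..<r}. ylow u0 rho0 x t = 0 \<and> yupp u0 rho0 x t = 0)
    \<and> ylow u0 rho0 r t = 0
    \<and> (\<forall>t'. 0 < t' \<and> t' < t \<longrightarrow> interior (Iset u0 rho0 ub rhob t') \<noteq> {})
    \<and> (\<forall>p\<in>{(x, t'). 0 \<le> t' \<and> t' \<le> t \<and> x \<in> Iset u0 rho0 ub rhob t'}.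
         closed_segment (0::real \<times> real) p
           \<subseteq> {(x, t'). 0 \<le> t' \<and> t' \<le> t \<and> x \<in> Iset u0 rho0 ub rhob t'})"
proof -
  have gu0: "good u0"
    unfolding good_def using u0_meas u0_bdd by (metis atLeastAtMost_iff)
  have gub: "good ub"
    unfolding good_def using ub_meas ub_bdd by (metis atLeastAtMost_iff)
  have grho0: "good rho0"
    unfolding good_def using rho0_meas rho0_locbdd rho0_pos
    by (metis abs_of_pos atLeastAtMost_iff)
  have grhob: "good rhob"
    unfolding good_def using rhob_meas rhob_locbdd rhob_pos
    by (metis abs_of_pos atLeastAtMost_iff)
  interpret setting u0 ub rho0 rhob
    using gu0 gub grho0 grhob ub_pos rho0_pos rhob_pos u0_bdd by unfold_locales
  show ?thesis by (rule main[OF t_pos I_eq lr])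
qed

end
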